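(* Tight GFG-NSWs and tight GFG-NRWs are weak-type: every tight GFG-NSW and every tight GFG-NRW $\mathcal{A}=\langle\Sigma,Q,Q_0,\delta,\alpha\rangle$ whose language is recognized by some GFG-NWW has an equivalent GFG-NWW on the same structure, i.e. there is $\alpha'\subseteq Q$ such that $\langle\Sigma,Q,Q_0,\delta,\alpha'\rangle$ is a weak automaton, is GFG, and recognizes $L(\mathcal{A})$.
   Context: An automaton $\langle\Sigma,Q,Q_0,\delta,\alpha\rangle$ has $\delta:Q\times\Sigma\to2^Q$; runs are accepting if the set $S$ of infinitely visited states satisfies $\alpha$. Rabin ($\alpha$ a set of pairs $\langle E,F\rangle$): some pair has $S\cap E=\emptyset$, $S\cap F\ne\emptyset$; Streett: every pair has $S\cap E=\emptyset$ or $S\cap F\ne\emptyset$; Büchi ($\alpha\subseteq Q$): $S\cap\alpha\ne\emptyset$. A Büchi automaton is weak if each strongly connected component $C$ satisfies $C\subseteq\alpha$ or $C\cap\alpha=\emptyset$. NSW/NRW/NWW: nondeterministic Streett/Rabin/weak word automaton. $\mathcal{A}$ is GFG if there is a strategy $g:\Sigma^*\to Q$ such that for every $w=a_1a_2\cdots$, $g(\epsilon),g(a_1),g(a_1a_2),\ldots$ is a run on $w$, accepting whenever $w\in L(\mathcal{A})$. Finite-state strategies are transducers $g=\langle\Sigma,Q,M,m_0,\rho,\tau\rangle$ (finite memories $M$, $\rho:M\times\Sigma\to M$ extended to words from $m_0$, $\tau:M\to Q$, $g(u)=\tau(\rho(u))$); $m$ is a memory of $q$ if $\tau(m)=q$.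 $\mathcal{A}_g=\langle\Sigma,M,m_0,\rho,\alpha_g\rangle$ where $\alpha_g$ replaces each set $F$ in $\alpha$ by $\{m\mid\tau(m)\in F\}$. A transition $\langle q,a,q'\rangle$ is used by $g$ if $q=g(u)$, $q'=g(ua)$ for some $u$. A combination of paths from a set $P$ of finite paths is the union of the element sets of a nonempty subset of $P$. For memories $m\neq m'$ with $\tau(m)=\tau(m')$, $m$ is replaceable by $m'$ if the set of paths of $\mathcal{A}_g$ from $m'$ to $m$ is empty or all its combinations are accepting. $\mathcal{A}$ is tight if for some finite-state strategy $g$ witnessing its GFGness, every transition is used by $g$ and no memory is replaceable by a different memory of the same state. *)

theory Defs
  imports Main
begin

datatype 'q cond =
    Rabin "('q set \<times> 'q set) set"
  | Streett "('q set \<times> 'q set) set"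
  | Buchi "'q set"

fun accepts :: "'q cond \<Rightarrow> 'q set \<Rightarrow> bool" where
  "accepts (Rabin P) S = (\<exists>(E, F) \<in> P. S \<inter> E = {} \<and> S \<inter> F \<noteq> {})"
| "accepts (Streett P) S = (\<forall>(E, F) \<in> P. S \<inter> E = {} \<or> S \<inter> F \<noteq> {})"
| "accepts (Buchi F) S = (S \<inter> F \<noteq> {})"

definition pre :: "'m set \<Rightarrow> ('m \<Rightarrow> 'q) \<Rightarrow> 'q set \<Rightarrow> 'm set" where
  "pre M tau F = {m \<in> M. tau m \<in> F}"

fun map_cond :: "'m set \<Rightarrow> ('m \<Rightarrow> 'q) \<Rightarrow> 'q cond \<Rightarrow> 'm cond" where
  "map_cond M tau (Rabin P) = Rabin ((\<lambda>(E, F). (pre M tau E, pre M tau F)) ` P)"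
| "map_cond M tau (Streett P) = Streett ((\<lambda>(E, F). (pre M tau E, pre M tau F)) ` P)"
| "map_cond M tau (Buchi F) = Buchi (pre M tau F)"

record ('a, 'q) aut =
  alph :: "'a set"
  states :: "'q set"
  init :: "'q set"
  trans :: "'q \<Rightarrow> 'a \<Rightarrow> 'q set"
  acc :: "'q cond"

definition automaton :: "('a, 'q) aut \<Rightarrow> bool" where
  "automaton A \<longleftrightarrow> finite (alph A) \<and> finite (states A) \<and> init A \<subseteq> states A \<and>
     (\<forall>q \<in> states A. \<forall>a \<in> alph A. trans A q a \<subseteq> states A)"

definition word :: "('a, 'q) aut \<Rightarrow> (nat \<Rightarrow> 'a) \<Rightarrow> bool" where
  "word A w \<longleftrightarrow> (\<forall>i. w i \<in> alph A)"

definition run :: "('a, 'q) aut \<Rightarrow> (nat \<Rightarrow> 'a) \<Rightarrow> (nat \<Rightarrow> 'q) \<Rightarrow> bool" where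
  "run A w r \<longleftrightarrow> r 0 \<in> init A \<and> (\<forall>i. r (Suc i) \<in> trans A (r i) (w i))"

definition inf_set :: "(nat \<Rightarrow> 'q) \<Rightarrow> 'q set" where
  "inf_set r = {q. \<exists>\<^sub>\<infinity>i. r i = q}"

definition accepting_run :: "('a, 'q) aut \<Rightarrow> (nat \<Rightarrow> 'a) \<Rightarrow> (nat \<Rightarrow> 'q) \<Rightarrow> bool" where
  "accepting_run A w r \<longleftrightarrow> run A w r \<and> accepts (acc A) (inf_set r)"

definition lang :: "('a, 'q) aut \<Rightarrow> (nat \<Rightarrow> 'a) set" where
  "lang A = {w. word A w \<and> (\<exists>r. accepting_run A w r)}"

definition edges :: "('a, 'q) aut \<Rightarrow> ('q \<times> 'q) set" where
  "edges A = {(q, q'). q \<in> states A \<and> (\<exists>a \<in> alph A. q' \<in> trans A q a)}"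

definition scc :: "('a, 'q) aut \<Rightarrow> 'q \<Rightarrow> 'q set" where
  "scc A q = {q' \<in> states A. (q, q') \<in> (edges A)\<^sup>* \<and> (q', q) \<in> (edges A)\<^sup>*}"

definition weak :: "('a, 'q) aut \<Rightarrow> bool" where
  "weak A \<longleftrightarrow> (\<exists>\<alpha>. acc A = Buchi \<alpha> \<and> \<alpha> \<subseteq> states A \<and>
     (\<forall>q \<in> states A. scc A q \<subseteq> \<alpha> \<or> scc A q \<inter> \<alpha> = {}))"

definition pref :: "nat \<Rightarrow> (nat \<Rightarrow> 'a) \<Rightarrow> 'a list" where
  "pref i w = map w [0..<i]"

definition gfg_strategy :: "('a, 'q) aut \<Rightarrow> ('a list \<Rightarrow> 'q) \<Rightarrow> bool" where
  "gfg_strategy A g \<longleftrightarrow> (\<forall>w. word A w \<longrightarrow>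
      run A w (\<lambda>i. g (pref i w)) \<and>
      (w \<in> lang A \<longrightarrow> accepts (acc A) (inf_set (\<lambda>i. g (pref i w)))))"

definition GFG :: "('a, 'q) aut \<Rightarrow> bool" where
  "GFG A \<longleftrightarrow> (\<exists>g. gfg_strategy A g)"

section \<open>Finite-state strategies (memories are natural numbers, w.l.o.g.)\<close>

record ('a, 'q) transducer =
  mem :: "nat set"
  m0 :: nat
  rho :: "nat \<Rightarrow> 'a \<Rightarrow> nat"
  tau :: "nat \<Rightarrow> 'q"

definition transducer_wf :: "('a, 'q) aut \<Rightarrow> ('a, 'q) transducer \<Rightarrow> bool" where
  "transducer_wf A T \<longleftrightarrow> finite (mem T) \<and> m0 T \<in> mem T \<and>
     (\<forall>m \<in> mem T. \<forall>a \<in> alph A. rho T m a \<in> mem T) \<and>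
     (\<forall>m \<in> mem T. tau T m \<in> states A)"

definition rho_star :: "('a, 'q) transducer \<Rightarrow> 'a list \<Rightarrow> nat" where
  "rho_star T u = fold (\<lambda>a m. rho T m a) u (m0 T)"

definition strat :: "('a, 'q) transducer \<Rightarrow> 'a list \<Rightarrow> 'q" where
  "strat T u = tau T (rho_star T u)"

definition mem_aut :: "('a, 'q) aut \<Rightarrow> ('a, 'q) transducer \<Rightarrow> ('a, nat) aut" where
  "mem_aut A T = \<lparr> alph = alph A, states = mem T, init = {m0 T},
      trans = (\<lambda>m a. {rho T m a}), acc = map_cond (mem T) (tau T) (acc A) \<rparr>"

definition used :: "('a, 'q) aut \<Rightarrow> ('a, 'q) transducer \<Rightarrow> 'q \<Rightarrow> 'a \<Rightarrow> 'q \<Rightarrow> bool" where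
  "used A T q a q' \<longleftrightarrow> (\<exists>u \<in> lists (alph A). q = strat T u \<and> q' = strat T (u @ [a]))"

definition paths :: "('a, 'q) aut \<Rightarrow> 'q \<Rightarrow> 'q \<Rightarrow> 'q list set" where
  "paths A p p' = {ps. ps \<noteq> [] \<and> hd ps = p \<and> last ps = p' \<and> set ps \<subseteq> states A \<and>
      (\<forall>i. Suc i < length ps \<longrightarrow> (\<exists>a \<in> alph A. ps ! Suc i \<in> trans A (ps ! i) a))}"

definition replaceable :: "('a, 'q) aut \<Rightarrow> ('a, 'q) transducer \<Rightarrow> nat \<Rightarrow> nat \<Rightarrow> bool" where
  "replaceable A T m m' \<longleftrightarrow> m \<in> mem T \<and> m' \<in> mem T \<and> m \<noteq> m' \<and> tau T m = tau T m' \<and>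
     (let P = paths (mem_aut A T) m' m in
       P = {} \<or> (\<forall>X \<subseteq> P. X \<noteq> {} \<longrightarrow> accepts (acc (mem_aut A T)) (\<Union>ps \<in> X. set ps)))"

definition tight :: "('a, 'q) aut \<Rightarrow> bool" where
  "tight A \<longleftrightarrow> (\<exists>T. transducer_wf A T \<and> gfg_strategy A (strat T) \<and>
     (\<forall>q \<in> states A. \<forall>a \<in> alph A. \<forall>q' \<in> trans A q a. used A T q a q') \<and>
     (\<forall>m m'. \<not> replaceable A T m m'))"

end

theory Submission
  imports Defs "HOL-Library.Infinite_Set"
begin

definition conc :: "'a list \<Rightarrow> (nat \<Rightarrow> 'a) \<Rightarrow> nat \<Rightarrow> 'a" where
  "conc p z = (\<lambda>i. if i < length p then p ! i else z (i - length p))"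

lemma length_pref[simp]: "length (pref k z) = k"
  by (simp add: pref_def)

lemma pref_nth[simp]: "i < k \<Longrightarrow> pref k z ! i = z i"
  by (simp add: pref_def)

lemma pref_Suc: "pref (Suc k) z = pref k z @ [z k]"
  by (simp add: pref_def)

lemma pref_conc: "pref (length p + k) (conc p z) = p @ pref k z"
  by (rule nth_equalityI) (auto simp: conc_def nth_append)

lemma pref_0[simp]: "pref 0 z = []"
  by (simp add: pref_def)

lemma pref_len_conc[simp]: "pref (length p) (conc p z) = p"
  using pref_conc[of p 0 z] by simp

lemma conc_snoc: "conc (p @ [a]) x = conc p (conc [a] x)"
  by (rule ext) (auto simp: conc_def nth_append)

lemma inf_set_shift: "inf_set (\<lambda>i. f (i + n)) = inf_set f"
proof -
  have "(\<exists>\<^sub>\<infinity>i. f (i + n) = q) = (\<exists>\<^sub>\<infinity>i. f i = q)" for q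
  proof
    assume "\<exists>\<^sub>\<infinity>i. f (i + n) = q"
    then show "\<exists>\<^sub>\<infinity>i. f i = q" unfolding INFM_nat_le
      by (metis le_add1 order_trans)
  next
    assume "\<exists>\<^sub>\<infinity>i. f i = q"
    then show "\<exists>\<^sub>\<infinity>i. f (i + n) = q" unfolding INFM_nat_le
      by (metis add_le_imp_le_diff le_add_diff_inverse2 le_add2 order_trans)
  qed
  then show ?thesis by (simp add: inf_set_def)
qed

lemma run_states:
  assumes "automaton A" "word A w" "run A w r"
  shows "r i \<in> states A"
proof (induction i)
  case 0 then show ?case using assms by (auto simp: automaton_def run_def)
next
  case (Suc i) then show ?case using assms unfolding automaton_def run_def word_def by blast
qed

lemma run_reach:
  assumes "automaton A" "word A w" "run A w r" "i \<le> j"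
  shows "(r i, r j) \<in> (edges A)\<^sup>*"
  using assms(4)
proof (induction j)
  case 0 then show ?case by simp
next
  case (Suc j)
  show ?case
  proof (cases "i = Suc j")
    case False
    then have "(r i, r j) \<in> (edges A)\<^sup>*" using Suc by simp
    moreover have "(r j, r (Suc j)) \<in> edges A"
      using assms run_states[OF assms(1-3), of j] by (auto simp: edges_def run_def word_def)
    ultimately show ?thesis by simp
  qed simp
qed

lemma eventually_inf:
  assumes "finite S" "\<And>i. r i \<in> S"
  shows "\<exists>N. \<forall>i\<ge>N. r i \<in> inf_set r"
proof -
  have "\<forall>q\<in>S - inf_set r. \<forall>\<^sub>\<infinity>i. r i \<noteq> q"
    by (auto simp: inf_set_def not_frequently)
  then have "\<forall>\<^sub>\<infinity>i. \<forall>q\<in>S - inf_set r. r i \<noteq> q"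
    using assms(1) by (simp add: MOST_finite_Ball_distrib)
  then obtain N where "\<forall>i\<ge>N. \<forall>q\<in>S - inf_set r. r i \<noteq> q" by (auto simp: MOST_nat_le)
  then show ?thesis using assms(2) by blast
qed

lemma inf_pigeon:
  assumes "finite S" "\<exists>\<^sub>\<infinity>i. r i \<in> S"
  shows "\<exists>q\<in>S. q \<in> inf_set r"
proof -
  have "\<exists>\<^sub>\<infinity>i. \<exists>q\<in>S. r i = q" using assms(2) by simp
  then have "\<exists>q\<in>S. \<exists>\<^sub>\<infinity>i. r i = q" using assms(1) INFM_finite_Bex_distrib by fast
  then show ?thesis by (simp add: inf_set_def)
qed

lemma inf_set_reach:
  assumes "automaton A" "word A w" "run A w r" "q1 \<in> inf_set r" "q2 \<in> inf_set r"
  shows "(q1, q2) \<in> (edges A)\<^sup>*"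
proof -
  obtain i where i: "r i = q1" using assms(4) by (auto simp: inf_set_def dest: INFM_EX)
  obtain j where "j \<ge> i" "r j = q2" using assms(5) by (auto simp: inf_set_def INFM_nat_le)
  then show ?thesis using run_reach[OF assms(1-3)] i by blast
qed

lemma word_conc:
  assumes "p \<in> lists (alph A)" "word A z"
  shows "word A (conc p z)"
  using assms by (auto simp: word_def conc_def)

lemma alt_step:
  assumes aut: "automaton B" and alpha: "acc B = Buchi \<alpha>" "\<alpha> \<subseteq> states B"
    and gfg: "gfg_strategy B h"
    and gl: "\<And>p. Good p \<Longrightarrow> p \<in> lists (alph B)"
    and accx: "\<And>p. Good p \<Longrightarrow> \<exists>z. word B z \<and> conc p z \<in> lang B \<and> (\<forall>k. Good (p @ pref k z))"
    and rejx: "\<And>p. Good p \<Longrightarrow> \<exists>z. word B z \<and> conc p z \<notin> lang B \<and> (\<forall>k. Good (p @ pref k z))"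
    and "Good p"
  shows "\<exists>p'. Good p' \<and> (\<exists>v. p' = p @ v \<and> v \<noteq> []) \<and> (h p' \<in> \<alpha> \<longleftrightarrow> b)"
proof (cases b)
  case True
  obtain z where z: "word B z" "conc p z \<in> lang B" "\<forall>k. Good (p @ pref k z)" using accx[OF \<open>Good p\<close>] by blast
  let ?w = "conc p z"
  have "word B ?w" using word_conc gl[OF \<open>Good p\<close>] z(1) by blast
  then have "accepts (acc B) (inf_set (\<lambda>i. h (pref i ?w)))" using gfg z(2) by (auto simp: gfg_strategy_def)
  then obtain q where q: "q \<in> \<alpha>" "\<exists>\<^sub>\<infinity>i. h (pref i ?w) = q" using alpha by (auto simp: inf_set_def)
  then obtain i where i: "i \<ge> Suc (length p)" "h (pref i ?w) = q" by (auto simp: INFM_nat_le)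
  have k: "i = length p + (i - length p)" "i - length p > 0" using i(1) by auto
  have eq: "pref i ?w = p @ pref (i - length p) z" using pref_conc[of p "i - length p" z] k(1) by simp
  have ne: "pref (i - length p) z \<noteq> []" using k(2) by (metis length_pref list.size(3) less_irrefl)
  show ?thesis
    apply (rule exI[of _ "p @ pref (i - length p) z"])
    using z(3) i q True eq ne by metis
next
  case False
  obtain z where z: "word B z" "conc p z \<notin> lang B" "\<forall>k. Good (p @ pref k z)" using rejx[OF \<open>Good p\<close>] by blast
  let ?w = "conc p z"
  let ?r = "\<lambda>i. h (pref i ?w)"
  have w: "word B ?w" using word_conc gl[OF \<open>Good p\<close>] z(1) by blast
  then have run: "run B ?w ?r" using gfg by (auto simp: gfg_strategy_def)
  have "\<exists>i\<ge>Suc (length p). h (pref i ?w) \<notin> \<alpha>"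
  proof (rule ccontr)
    assume "\<not> ?thesis"
    then have all: "\<forall>i\<ge>Suc (length p). ?r i \<in> \<alpha>" by blast
    have "\<exists>\<^sub>\<infinity>i. ?r i \<in> \<alpha>" unfolding INFM_nat_le
    proof
      fix m show "\<exists>n\<ge>m. ?r n \<in> \<alpha>" using all[rule_format, of "max m (Suc (length p))"] by (intro exI[of _ "max m (Suc (length p))"]) simp
    qed
    moreover have "finite \<alpha>" using alpha(2) aut unfolding automaton_def using finite_subset by blast
    ultimately obtain q where "q \<in> \<alpha>" "q \<in> inf_set ?r" using inf_pigeon[of \<alpha> ?r] by blast
    then have "accepting_run B ?w ?r" using run alpha by (auto simp: accepting_run_def)
    then show False using z(2) w by (auto simp: lang_def)
  qed
  then obtain i where i: "i \<ge> Suc (length p)" "h (pref i ?w) \<notin> \<alpha>" by blast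
  have k: "i = length p + (i - length p)" "i - length p > 0" using i(1) by auto
  have eq: "pref i ?w = p @ pref (i - length p) z" using pref_conc[of p "i - length p" z] k(1) by simp
  have ne: "pref (i - length p) z \<noteq> []" using k(2) by (metis length_pref list.size(3) less_irrefl)
  show ?thesis
    apply (rule exI[of _ "p @ pref (i - length p) z"])
    using z(3) i False eq ne by metis
qed

lemma weak_gfg_alt:
  assumes aut: "automaton B" and wk: "weak B" and gfg: "gfg_strategy B h"
    and gl: "\<And>p. Good p \<Longrightarrow> p \<in> lists (alph B)"
    and p0: "Good p0"
    and accx: "\<And>p. Good p \<Longrightarrow> \<exists>z. word B z \<and> conc p z \<in> lang B \<and> (\<forall>k. Good (p @ pref k z))"
    and rejx: "\<And>p. Good p \<Longrightarrow> \<exists>z. word B z \<and> conc p z \<notin> lang B \<and> (\<forall>k. Good (p @ pref k z))"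
  shows False
proof -
  obtain \<alpha> where alpha: "acc B = Buchi \<alpha>" "\<alpha> \<subseteq> states B"
    and wk\<alpha>: "\<forall>q \<in> states B. scc B q \<subseteq> \<alpha> \<or> scc B q \<inter> \<alpha> = {}"
    using wk by (auto simp: weak_def)
  define F where "F p b = (SOME p'. Good p' \<and> (\<exists>v. p' = p @ v \<and> v \<noteq> []) \<and> (h p' \<in> \<alpha> \<longleftrightarrow> b))" for p b
  have F: "Good (F p b) \<and> (\<exists>v. F p b = p @ v \<and> v \<noteq> []) \<and> (h (F p b) \<in> \<alpha> \<longleftrightarrow> b)" if "Good p" for p b
    unfolding F_def by (rule someI_ex, rule alt_step[OF aut alpha gfg gl accx rejx that])
  define f where "f = rec_nat p0 (\<lambda>n p. F p (even n))"
  have f0: "f 0 = p0" and fS: "f (Suc n) = F (f n) (even n)" for n by (simp_all add: f_def)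
  have good: "Good (f n)" for n
    by (induction n) (auto simp: f0 fS p0 F)
  have ext: "\<exists>v. f (Suc n) = f n @ v \<and> v \<noteq> []" for n using F[OF good[of n]] fS by simp
  have len: "length (f n) \<ge> n" for n
  proof (induction n)
    case (Suc n)
    obtain v where "f (Suc n) = f n @ v" "v \<noteq> []" using ext by blast
    then show ?case using Suc by (cases v) auto
  qed simp
  have pre: "\<exists>v. f n = f m @ v" if "m \<le> n" for m n
    using that
  proof (induction n rule: dec_induct)
    case (step n)
    then obtain v where "f n = f m @ v" by blast
    moreover obtain v' where "f (Suc n) = f n @ v'" using ext by blast
    ultimately show ?case by auto
  qed simp
  have mem: "h (f (Suc n)) \<in> \<alpha> \<longleftrightarrow> even n" for n using F[OF good[of n]] fS by simp
  define W where "W i = f (Suc i) ! i" for i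
  have nthW: "W i = f n ! i" if "i < length (f n)" for i n
  proof (cases "Suc i \<le> n")
    case True
    then obtain v where "f n = f (Suc i) @ v" using pre by blast
    moreover have "i < length (f (Suc i))" using len[of "Suc i"] by simp
    ultimately show ?thesis by (simp add: W_def nth_append)
  next
    case False
    then have "n \<le> Suc i" by simp
    then obtain v where "f (Suc i) = f n @ v" using pre by blast
    then show ?thesis using that by (simp add: W_def nth_append)
  qed
  have prefW: "pref (length (f n)) W = f n" for n
    by (rule nth_equalityI) (auto simp: nthW)
  have wordW: "word B W"
  proof -
    have "W i \<in> alph B" for i
    proof -
      have "i < length (f (Suc i))" using len[of "Suc i"] by simp
      then have "W i \<in> set (f (Suc i))" by (simp add: W_def)
      then show ?thesis using gl[OF good[of "Suc i"]] by auto
    qed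
    then show ?thesis by (simp add: word_def)
  qed
  let ?R = "\<lambda>i. h (pref i W)"
  have run: "run B W ?R" using gfg wordW by (auto simp: gfg_strategy_def)
  have inS: "?R i \<in> states B" for i using run_states[OF aut wordW run] .
  have Rf: "?R (length (f (Suc n))) = h (f (Suc n))" for n using prefW by simp
  have i1: "\<exists>\<^sub>\<infinity>i. ?R i \<in> \<alpha>" unfolding INFM_nat_le
  proof
    fix m
    have "length (f (Suc (2*m))) \<ge> m" using len[of "Suc (2*m)"] by simp
    moreover have "?R (length (f (Suc (2*m)))) \<in> \<alpha>" using Rf mem by simp
    ultimately show "\<exists>n\<ge>m. ?R n \<in> \<alpha>" by blast
  qed
  have i2: "\<exists>\<^sub>\<infinity>i. ?R i \<in> states B - \<alpha>" unfolding INFM_nat_le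
  proof
    fix m
    have "length (f (Suc (Suc (2*m)))) \<ge> m" using len[of "Suc (Suc (2*m))"] by simp
    moreover have "?R (length (f (Suc (Suc (2*m))))) \<in> states B - \<alpha>" using Rf[of "Suc (2*m)"] mem[of "Suc (2*m)"] inS[of "length (f (Suc (Suc (2*m))))"] by simp
    ultimately show "\<exists>n\<ge>m. ?R n \<in> states B - \<alpha>" by blast
  qed
  have finS: "finite (states B)" using aut by (simp add: automaton_def)
  have "finite \<alpha>" using alpha(2) finS finite_subset by blast
  then obtain q1 where q1: "q1 \<in> \<alpha>" "q1 \<in> inf_set ?R" using inf_pigeon[of \<alpha> ?R] i1 by blast
  obtain q2 where q2: "q2 \<in> states B - \<alpha>" "q2 \<in> inf_set ?R" using inf_pigeon[of "states B - \<alpha>" ?R] i2 finS by blast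
  have "(q1, q2) \<in> (edges B)\<^sup>*" "(q2, q1) \<in> (edges B)\<^sup>*"
    using inf_set_reach[OF aut wordW run] q1 q2 by blast+
  then have "q2 \<in> scc B q1" "q1 \<in> scc B q1" using q1 q2 alpha(2) by (auto simp: scc_def)
  then show False using wk\<alpha> q1 q2 alpha(2) by blast
qed

definition Res :: "('a, 'q) aut \<Rightarrow> 'q \<Rightarrow> (nat \<Rightarrow> 'a) \<Rightarrow> bool" where
  "Res A s x \<longleftrightarrow> (\<exists>\<zeta>. \<zeta> 0 = s \<and> (\<forall>i. \<zeta> (Suc i) \<in> trans A (\<zeta> i) (x i)) \<and> accepts (acc A) (inf_set \<zeta>))"

lemma Res_iff:
  assumes gfg: "gfg_strategy A g" and u: "u \<in> lists (alph A)" and x: "word A x" and s: "g u = s"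
  shows "conc u x \<in> lang A \<longleftrightarrow> Res A s x"
proof
  let ?w = "conc u x"
  have w: "word A ?w" using word_conc[OF u x] .
  let ?R = "\<lambda>i. g (pref i ?w)"
  have run: "run A ?w ?R" using gfg w by (auto simp: gfg_strategy_def)
  {
    assume "?w \<in> lang A"
    then have acc: "accepts (acc A) (inf_set ?R)" using gfg w by (auto simp: gfg_strategy_def)
    let ?z = "\<lambda>i. ?R (i + length u)"
    have "?z 0 = s" using pref_conc[of u 0 x] s by simp
    moreover have "\<forall>i. ?z (Suc i) \<in> trans A (?z i) (x i)"
    proof
      fix i
      have "?R (Suc (i + length u)) \<in> trans A (?R (i + length u)) (?w (i + length u))"
        using run by (simp add: run_def)
      then show "?z (Suc i) \<in> trans A (?z i) (x i)" by (simp add: conc_def)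
    qed
    moreover have "accepts (acc A) (inf_set ?z)" using acc inf_set_shift[of ?R "length u"] by simp
    ultimately show "Res A s x" unfolding Res_def by (intro exI[of _ ?z]) simp
  }
  {
    assume "Res A s x"
    then obtain z where z: "z 0 = s" "\<forall>i. z (Suc i) \<in> trans A (z i) (x i)" "accepts (acc A) (inf_set z)"
      unfolding Res_def by blast
    define R' where "R' i = (if i \<le> length u then ?R i else z (i - length u))" for i
    have "run A ?w R'"
      unfolding run_def
    proof
      show "R' 0 \<in> init A" using run by (simp add: R'_def run_def)
      show "\<forall>i. R' (Suc i) \<in> trans A (R' i) (?w i)"
      proof
        fix i
        show "R' (Suc i) \<in> trans A (R' i) (?w i)"
        proof (cases "i < length u")
          case True
          then show ?thesis using run by (simp add: R'_def run_def)
        next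
          case False
          have "z (Suc (i - length u)) \<in> trans A (z (i - length u)) (x (i - length u))" using z(2) by blast
          moreover have "R' i = z (i - length u)"
          proof (cases "i = length u")
            case True
            then show ?thesis using pref_conc[of u 0 x] s z(1) by (simp add: R'_def)
          qed (use False in \<open>simp add: R'_def\<close>)
          moreover have "R' (Suc i) = z (Suc (i - length u))" using False by (simp add: R'_def Suc_diff_le)
          moreover have "?w i = x (i - length u)" using False by (simp add: conc_def)
          ultimately show ?thesis by simp
        qed
      qed
    qed
    moreover have "inf_set R' = inf_set z"
    proof -
      have "(\<lambda>i. R' (i + length u)) = z"
      proof
        fix i show "R' (i + length u) = z i"
          using pref_conc[of u 0 x] s z(1) by (cases i) (simp_all add: R'_def)
      qed
      then show ?thesis using inf_set_shift[of R' "length u"] by simp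
    qed
    ultimately show "?w \<in> lang A" using w z(3) by (auto simp: lang_def accepting_run_def)
  }
qed

lemma lang_from_suffix:
  assumes w: "word A w" and r: "run A w r" and R: "Res A (r N) (\<lambda>i. w (N + i))"
  shows "w \<in> lang A"
proof -
  obtain z where z: "z 0 = r N" "\<forall>i. z (Suc i) \<in> trans A (z i) (w (N + i))" "accepts (acc A) (inf_set z)"
    using R unfolding Res_def by blast
  define R' where "R' i = (if i \<le> N then r i else z (i - N))" for i
  have "run A w R'"
    unfolding run_def
  proof
    show "R' 0 \<in> init A" using r by (simp add: R'_def run_def)
    show "\<forall>i. R' (Suc i) \<in> trans A (R' i) (w i)"
    proof
      fix i
      show "R' (Suc i) \<in> trans A (R' i) (w i)"
      proof (cases "i < N")
        case True
        then show ?thesis using r by (simp add: R'_def run_def)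
      next
        case False
        have "z (Suc (i - N)) \<in> trans A (z (i - N)) (w (N + (i - N)))" using z(2) by blast
        moreover have "R' i = z (i - N)"
          using False z(1) by (cases "i = N") (simp_all add: R'_def)
        moreover have "R' (Suc i) = z (Suc (i - N))" using False by (simp add: R'_def Suc_diff_le)
        ultimately show ?thesis using False by simp
      qed
    qed
  qed
  moreover have "inf_set R' = inf_set z"
  proof -
    have "(\<lambda>i. R' (i + N)) = z"
    proof
      fix i show "R' (i + N) = z i" using z(1) by (cases i) (simp_all add: R'_def)
    qed
    then show ?thesis using inf_set_shift[of R' N] by simp
  qed
  ultimately show ?thesis using w z(3) by (auto simp: lang_def accepting_run_def)
qed

lemma Res_step:
  assumes gfg: "gfg_strategy A g"
    and used: "\<And>q a q'. q \<in> states A \<Longrightarrow> a \<in> alph A \<Longrightarrow> q' \<in> trans A q a \<Longrightarrow>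
                 \<exists>u\<in>lists (alph A). g u = q \<and> g (u @ [a]) = q'"
    and "s \<in> states A" "a \<in> alph A" "s' \<in> trans A s a" "word A x"
  shows "Res A s (conc [a] x) \<longleftrightarrow> Res A s' x"
proof -
  obtain u where u: "u \<in> lists (alph A)" "g u = s" "g (u @ [a]) = s'" using used assms(3-5) by blast
  have ax: "word A (conc [a] x)" using word_conc[of "[a]" A x] assms(4,6) by simp
  have "Res A s (conc [a] x) \<longleftrightarrow> conc u (conc [a] x) \<in> lang A" using Res_iff[OF gfg u(1) ax u(2)] by simp
  also have "\<dots> \<longleftrightarrow> conc (u @ [a]) x \<in> lang A" by (simp add: conc_snoc)
  also have "\<dots> \<longleftrightarrow> Res A s' x" using Res_iff[OF gfg _ assms(6) u(3)] u(1) assms(4) by simp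
  finally show ?thesis .
qed

lemma scc_eq:
  assumes "q' \<in> scc A q"
  shows "scc A q' = scc A q"
  using assms unfolding scc_def by (auto intro: rtrancl_trans)

lemma scc_self:
  assumes "q \<in> states A"
  shows "q \<in> scc A q"
  using assms unfolding scc_def by auto

lemma path_in_scc_aux:
  assumes aut: "automaton A" and st: "(s, t) \<in> (edges A)\<^sup>*"
    and s: "s \<in> scc A c"
  shows "(t, c) \<in> (edges A)\<^sup>* \<longrightarrow> (\<exists>n y \<pi>. \<pi> 0 = s \<and> \<pi> n = t \<and>
           (\<forall>i<n. y i \<in> alph A \<and> \<pi> (Suc i) \<in> trans A (\<pi> i) (y i)) \<and> (\<forall>i\<le>n. \<pi> i \<in> scc A c))"
  using st
proof (induction rule: rtrancl_induct)
  case base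
  then show ?case using s by (intro impI exI[of _ 0] exI[of _ "\<lambda>_. s"]) auto
next
  case (step t t')
  show ?case
  proof
    assume t'c: "(t', c) \<in> (edges A)\<^sup>*"
    have "(t, c) \<in> (edges A)\<^sup>*" using step(2) t'c by (rule converse_rtrancl_into_rtrancl)
    then obtain n y \<pi> where p: "\<pi> 0 = s" "\<pi> n = t"
      "\<forall>i<n. y i \<in> alph A \<and> \<pi> (Suc i) \<in> trans A (\<pi> i) (y i)" "\<forall>i\<le>n. \<pi> i \<in> scc A c"
      using step(3) by blast
    obtain a where a: "t \<in> states A" "a \<in> alph A" "t' \<in> trans A t a" using step(2) by (auto simp: edges_def)
    have "t' \<in> states A" using aut a by (auto simp: automaton_def)
    moreover have "(c, t') \<in> (edges A)\<^sup>*"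
      using s step(1) step(2) by (auto simp: scc_def intro: rtrancl_trans)
    ultimately have t'in: "t' \<in> scc A c" using t'c by (simp add: scc_def)
    show "\<exists>n y \<pi>. \<pi> 0 = s \<and> \<pi> n = t' \<and>
           (\<forall>i<n. y i \<in> alph A \<and> \<pi> (Suc i) \<in> trans A (\<pi> i) (y i)) \<and> (\<forall>i\<le>n. \<pi> i \<in> scc A c)"
    proof (intro exI conjI allI impI)
      show "(\<pi>(Suc n := t')) 0 = s" using p by simp
      show "(\<pi>(Suc n := t')) (Suc n) = t'" by simp
      fix i
      {
        assume "i < Suc n"
        then show "(y(n := a)) i \<in> alph A" using p(3) a by (cases "i = n") auto
        show "(\<pi>(Suc n := t')) (Suc i) \<in> trans A ((\<pi>(Suc n := t')) i) ((y(n := a)) i)"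
          using p(2,3) a \<open>i < Suc n\<close> by (cases "i = n") auto
      }
      assume "i \<le> Suc n"
      then show "(\<pi>(Suc n := t')) i \<in> scc A c" using p(4) t'in by (cases "i = Suc n") auto
    qed
  qed
qed

lemma path_in_scc:
  assumes aut: "automaton A" and s: "s \<in> scc A c" and t: "t \<in> scc A c"
  shows "\<exists>n y \<pi>. \<pi> 0 = s \<and> \<pi> n = t \<and>
           (\<forall>i<n. y i \<in> alph A \<and> \<pi> (Suc i) \<in> trans A (\<pi> i) (y i)) \<and> (\<forall>i\<le>n. \<pi> i \<in> scc A c)"
proof -
  have "(s, t) \<in> (edges A)\<^sup>*" using s t by (auto simp: scc_def intro: rtrancl_trans)
  moreover have "(t, c) \<in> (edges A)\<^sup>*" using t by (simp add: scc_def)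
  ultimately show ?thesis using path_in_scc_aux[OF aut _ s] by blast
qed

definition GoodS :: "('a, 'q) aut \<Rightarrow> 'q set \<Rightarrow> 'a list \<Rightarrow> 'q \<Rightarrow> bool" where
  "GoodS A C p s \<longleftrightarrow> p \<in> lists (alph A) \<and> s \<in> C \<and>
     (\<forall>x. word A x \<longrightarrow> (conc p x \<in> lang A \<longleftrightarrow> Res A s x))"

lemma GoodS_path:
  assumes gfg: "gfg_strategy A g"
    and used: "\<And>q a q'. q \<in> states A \<Longrightarrow> a \<in> alph A \<Longrightarrow> q' \<in> trans A q a \<Longrightarrow>
                 \<exists>u\<in>lists (alph A). g u = q \<and> g (u @ [a]) = q'"
    and C: "C \<subseteq> states A"
    and G: "GoodS A C p (\<zeta> 0)"
    and inC: "\<And>i. \<zeta> i \<in> C" and tr: "\<And>i. \<zeta> (Suc i) \<in> trans A (\<zeta> i) (z i)" and z: "word A z"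
  shows "GoodS A C (p @ pref k z) (\<zeta> k)"
proof (induction k)
  case 0 then show ?case using G by simp
next
  case (Suc k)
  let ?p = "p @ pref k z"
  have a: "z k \<in> alph A" using z by (simp add: word_def)
  have sk: "\<zeta> k \<in> states A" using inC C by blast
  have "conc (?p @ [z k]) x \<in> lang A \<longleftrightarrow> Res A (\<zeta> (Suc k)) x" if x: "word A x" for x
  proof -
    have ax: "word A (conc [z k] x)" using word_conc[of "[z k]" A x] a x by simp
    have "conc (?p @ [z k]) x \<in> lang A \<longleftrightarrow> conc ?p (conc [z k] x) \<in> lang A" by (simp only: conc_snoc)
    also have "\<dots> \<longleftrightarrow> Res A (\<zeta> k) (conc [z k] x)" using Suc ax by (simp add: GoodS_def)
    also have "\<dots> \<longleftrightarrow> Res A (\<zeta> (Suc k)) x" using Res_step[OF gfg used sk a tr x] .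
    finally show ?thesis .
  qed
  moreover have "?p @ [z k] \<in> lists (alph A)" using Suc a by (simp add: GoodS_def)
  ultimately show ?case using inC by (simp add: GoodS_def pref_Suc)
qed

lemma glue:
  assumes p: "\<pi> 0 = s" "\<pi> n = t" "\<forall>i<n. y i \<in> alph A \<and> \<pi> (Suc i) \<in> trans A (\<pi> i) (y i)" "\<forall>i\<le>n. \<pi> i \<in> C"
    and x: "word A x" and zt: "\<zeta> 0 = t" and zin: "\<And>i. \<zeta> i \<in> C"
    and ztr: "\<And>i. \<zeta> (Suc i) \<in> trans A (\<zeta> i) (x i)"
  defines "z \<equiv> \<lambda>i. if i < n then y i else x (i - n)"
    and "\<zeta>' \<equiv> \<lambda>i. if i \<le> n then \<pi> i else \<zeta> (i - n)"
  shows "word A z" "\<zeta>' 0 = s" "\<And>i. \<zeta>' i \<in> C" "\<And>i. \<zeta>' (Suc i) \<in> trans A (\<zeta>' i) (z i)"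
    "inf_set \<zeta>' = inf_set \<zeta>" "\<zeta>' n = t" "conc (q @ pref n z) x = conc q z"
proof -
  show "word A z" using p(3) x by (auto simp: word_def z_def)
  show "\<zeta>' 0 = s" using p(1) by (simp add: \<zeta>'_def)
  show "\<zeta>' i \<in> C" for i using p(4) zin by (simp add: \<zeta>'_def)
  show "\<zeta>' n = t" using p(2) by (simp add: \<zeta>'_def)
  show "\<zeta>' (Suc i) \<in> trans A (\<zeta>' i) (z i)" for i
  proof (cases "i < n")
    case True then show ?thesis using p(3) by (simp add: \<zeta>'_def z_def)
  next
    case False
    have "\<zeta> (Suc (i - n)) \<in> trans A (\<zeta> (i - n)) (x (i - n))" using ztr by blast
    moreover have "\<zeta>' i = \<zeta> (i - n)" using False p(2) zt by (cases "i = n") (simp_all add: \<zeta>'_def)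
    moreover have "\<zeta>' (Suc i) = \<zeta> (Suc (i - n))" using False by (simp add: \<zeta>'_def Suc_diff_le)
    ultimately show ?thesis using False by (simp add: z_def)
  qed
  have "(\<lambda>i. \<zeta>' (i + n)) = \<zeta>"
  proof
    fix i show "\<zeta>' (i + n) = \<zeta> i" using p(2) zt by (cases i) (simp_all add: \<zeta>'_def)
  qed
  then show "inf_set \<zeta>' = inf_set \<zeta>" using inf_set_shift[of \<zeta>' n] by simp
  show "conc (q @ pref n z) x = conc q z"
    by (rule ext) (auto simp: conc_def nth_append z_def)
qed

lemma glue_ex:
  assumes p: "\<pi> 0 = s" "\<pi> n = t" "\<forall>i<n. y i \<in> alph A \<and> \<pi> (Suc i) \<in> trans A (\<pi> i) (y i)" "\<forall>i\<le>n. \<pi> i \<in> C"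
    and x: "word A x" and zt: "\<zeta> 0 = t" and zin: "\<And>i. \<zeta> i \<in> C"
    and ztr: "\<And>i. \<zeta> (Suc i) \<in> trans A (\<zeta> i) (x i)"
  shows "\<exists>z \<zeta>'. word A z \<and> \<zeta>' 0 = s \<and> (\<forall>i. \<zeta>' i \<in> C) \<and> (\<forall>i. \<zeta>' (Suc i) \<in> trans A (\<zeta>' i) (z i)) \<and>
    inf_set \<zeta>' = inf_set \<zeta> \<and> \<zeta>' n = t \<and> (\<forall>q. conc (q @ pref n z) x = conc q z)"
proof -
  note g = glue[OF p x zt zin ztr]
  show ?thesis
    apply (rule exI[of _ "\<lambda>i. if i < n then y i else x (i - n)"])
    apply (rule exI[of _ "\<lambda>i. if i \<le> n then \<pi> i else \<zeta> (i - n)"])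
    using g by blast
qed

lemma upd_simps[simp]:
  "edges (A\<lparr>acc := X\<rparr>) = edges A"
  "scc (A\<lparr>acc := X\<rparr>) = scc A"
  "word (A\<lparr>acc := X\<rparr>) = word A"
  "run (A\<lparr>acc := X\<rparr>) = run A"
  by (simp_all add: edges_def scc_def word_def run_def fun_eq_iff)

theorem corollary19:
  fixes A :: "('a, 'q) aut" and B :: "('a, 'p) aut"
  assumes "automaton A"
    and "(\<exists>P. acc A = Streett P) \<or> (\<exists>P. acc A = Rabin P)"
    and "GFG A"
    and "tight A"
    and "automaton B" and "alph B = alph A" and "weak B" and "GFG B"
    and "lang B = lang A"
  shows "\<exists>\<alpha>' \<subseteq> states A. weak (A\<lparr>acc := Buchi \<alpha>'\<rparr>) \<and> GFG (A\<lparr>acc := Buchi \<alpha>'\<rparr>) \<and>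
           lang (A\<lparr>acc := Buchi \<alpha>'\<rparr>) = lang A"
proof -
  note aut = assms(1) and autB = assms(5) and alB = assms(6) and wkB = assms(7) and lB = assms(9)
  obtain T where gfg: "gfg_strategy A (strat T)"
    and usedT: "\<forall>q \<in> states A. \<forall>a \<in> alph A. \<forall>q' \<in> trans A q a. used A T q a q'"
    using assms(4) unfolding tight_def by blast
  define g where "g = strat T"
  have gfg: "gfg_strategy A g" using gfg by (simp add: g_def)
  have used: "\<exists>u\<in>lists (alph A). g u = q \<and> g (u @ [a]) = q'"
    if "q \<in> states A" "a \<in> alph A" "q' \<in> trans A q a" for q a q'
    using usedT that unfolding used_def g_def by metis
  obtain h where gfgB: "gfg_strategy B h" using assms(8) by (auto simp: GFG_def)
  have wordB: "word B = word A" using alB by (simp add: word_def fun_eq_iff)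
  have finA: "finite (states A)" using aut by (simp add: automaton_def)
  define \<alpha>' where "\<alpha>' = {q \<in> states A. \<exists>x \<zeta>. word A x \<and> (\<forall>i. \<zeta> (Suc i) \<in> trans A (\<zeta> i) (x i)) \<and>
      (\<forall>i. \<zeta> i \<in> scc A q) \<and> accepts (acc A) (inf_set \<zeta>)}"
  have sub: "\<alpha>' \<subseteq> states A" by (auto simp: \<alpha>'_def)
  have ka: "inf_set (\<lambda>i. g (pref i w)) \<inter> \<alpha>' \<noteq> {}" if w: "word A w" "w \<in> lang A" for w
  proof -
    let ?r = "\<lambda>i. g (pref i w)"
    have run: "run A w ?r" and acc: "accepts (acc A) (inf_set ?r)"
      using gfg w by (auto simp: gfg_strategy_def)
    have st: "?r i \<in> states A" for i using run_states[OF aut w(1) run] .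
    obtain N where N: "\<forall>i\<ge>N. ?r i \<in> inf_set ?r" using eventually_inf[of "states A" ?r, OF finA st] by blast
    let ?q = "?r N"
    have qi: "?q \<in> inf_set ?r" using N by simp
    let ?z = "\<lambda>i. ?r (i + N)"
    have "?z i \<in> scc A ?q" for i
    proof -
      have "?z i \<in> inf_set ?r" using N by simp
      then show ?thesis using inf_set_reach[OF aut w(1) run] qi st by (simp add: scc_def)
    qed
    moreover have "?z (Suc i) \<in> trans A (?z i) (w (i + N))" for i using run by (simp add: run_def)
    moreover have "word A (\<lambda>i. w (i + N))" using w(1) by (simp add: word_def)
    moreover have "accepts (acc A) (inf_set ?z)" using acc inf_set_shift[of ?r N] by simp
    ultimately have "?q \<in> \<alpha>'" unfolding \<alpha>'_def using st[of N]
      by (intro CollectI conjI exI[of _ "\<lambda>i. w (i + N)"] exI[of _ ?z]) auto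
    then show ?thesis using qi by blast
  qed
  have kb: "w \<in> lang A" if w: "word A w" and r: "run A w r" and q1: "q1 \<in> inf_set r" "q1 \<in> \<alpha>'" for w r q1
  proof (rule ccontr)
    assume nw: "w \<notin> lang A"
    have st: "r i \<in> states A" for i using run_states[OF aut w r] .
    obtain N where N: "\<forall>i\<ge>N. r i \<in> inf_set r" using eventually_inf[of "states A" r, OF finA st] by blast
    define C where "C = scc A q1"
    have CS: "C \<subseteq> states A" by (auto simp: C_def scc_def)
    have rC: "r (N + i) \<in> C" for i
    proof -
      have "r (N + i) \<in> inf_set r" using N by simp
      then show ?thesis using inf_set_reach[OF aut w r] q1(1) st by (simp add: scc_def C_def)
    qed
    obtain x0 \<zeta>0 where w0: "word A x0" "\<forall>i. \<zeta>0 (Suc i) \<in> trans A (\<zeta>0 i) (x0 i)"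
      "\<forall>i. \<zeta>0 i \<in> C" "accepts (acc A) (inf_set \<zeta>0)"
      using q1(2) unfolding \<alpha>'_def C_def by blast
    let ?Good = "\<lambda>p. \<exists>s. GoodS A C p s"
    have "w N \<in> alph A" using w by (simp add: word_def)
    moreover have "r (Suc N) \<in> trans A (r N) (w N)" using r by (simp add: run_def)
    ultimately obtain u where u: "u \<in> lists (alph A)" "g u = r N" using used st by blast
    have "GoodS A C u (r N)" using Res_iff[OF gfg u(1) _ u(2)] u(1) rC[of 0] by (simp add: GoodS_def)
    show False
    proof (rule weak_gfg_alt[OF autB wkB gfgB, of ?Good u])
      show "p \<in> lists (alph B)" if "?Good p" for p using that alB by (auto simp: GoodS_def)
      show "?Good u" using \<open>GoodS A C u (r N)\<close> by blast
    next
      fix p assume "?Good p"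
      then obtain s where G: "GoodS A C p s" by blast
      then have sC: "s \<in> C" by (simp add: GoodS_def)
      have z0C: "\<zeta>0 0 \<in> scc A q1" using w0(3) by (simp add: C_def)
      obtain n y \<pi> where p: "\<pi> 0 = s" "\<pi> n = \<zeta>0 0"
        "\<forall>i<n. y i \<in> alph A \<and> \<pi> (Suc i) \<in> trans A (\<pi> i) (y i)" "\<forall>i\<le>n. \<pi> i \<in> C"
        using path_in_scc[OF aut _ z0C, of s] sC unfolding C_def by blast
      obtain z \<zeta>' where gl: "word A z" "\<zeta>' 0 = s" "\<And>i. \<zeta>' i \<in> C" "\<And>i. \<zeta>' (Suc i) \<in> trans A (\<zeta>' i) (z i)"
        "inf_set \<zeta>' = inf_set \<zeta>0" "\<zeta>' n = \<zeta>0 0" "\<And>q. conc (q @ pref n z) x0 = conc q z"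
        using glue_ex[OF p w0(1) refl w0(3)[rule_format] w0(2)[rule_format]] by blast
      have "Res A s z" unfolding Res_def using gl(2,4,5) w0(4) by (intro exI[of _ \<zeta>']) auto
      then have "conc p z \<in> lang A" using G gl(1) by (simp add: GoodS_def)
      moreover have "\<forall>k. ?Good (p @ pref k z)"
      proof
        fix k
        have "GoodS A C p (\<zeta>' 0)" using G gl(2) by simp
        then show "?Good (p @ pref k z)" using GoodS_path[OF gfg used CS _ gl(3) gl(4) gl(1)] by blast
      qed
      ultimately show "\<exists>z. word B z \<and> conc p z \<in> lang B \<and> (\<forall>k. ?Good (p @ pref k z))"
        using gl(1) wordB lB by auto
    next
      fix p assume "?Good p"
      then obtain s where G: "GoodS A C p s" by blast
      then have sC: "s \<in> C" by (simp add: GoodS_def)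
      have qC: "r N \<in> scc A q1" using rC[of 0] by (simp add: C_def)
      obtain n y \<pi> where p: "\<pi> 0 = s" "\<pi> n = r N"
        "\<forall>i<n. y i \<in> alph A \<and> \<pi> (Suc i) \<in> trans A (\<pi> i) (y i)" "\<forall>i\<le>n. \<pi> i \<in> C"
        using path_in_scc[OF aut _ qC, of s] sC unfolding C_def by blast
      let ?x = "\<lambda>i. w (N + i)"
      let ?\<zeta> = "\<lambda>i. r (N + i)"
      have wx: "word A ?x" using w by (simp add: word_def)
      have trx: "?\<zeta> (Suc i) \<in> trans A (?\<zeta> i) (?x i)" for i using r by (simp add: run_def)
      have z0: "?\<zeta> 0 = r N" by simp
      obtain z \<zeta>' where gl: "word A z" "\<zeta>' 0 = s" "\<And>i. \<zeta>' i \<in> C" "\<And>i. \<zeta>' (Suc i) \<in> trans A (\<zeta>' i) (z i)"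
        "inf_set \<zeta>' = inf_set ?\<zeta>" "\<zeta>' n = r N" "\<And>q. conc (q @ pref n z) ?x = conc q z"
        using glue_ex[OF p wx z0 rC trx] by blast
      have "GoodS A C p (\<zeta>' 0)" using G gl(2) by simp
      then have Gk: "GoodS A C (p @ pref k z) (\<zeta>' k)" for k
        using GoodS_path[OF gfg used CS _ gl(3) gl(4) gl(1)] by blast
      have "conc p z \<notin> lang A"
      proof
        assume "conc p z \<in> lang A"
        then have "conc (p @ pref n z) ?x \<in> lang A" using gl(7) by simp
        then have "Res A (r N) ?x" using Gk[of n] gl(6) wx by (simp add: GoodS_def)
        then show False using lang_from_suffix[OF w r] nw by blast
      qed
      moreover have "\<forall>k. ?Good (p @ pref k z)" using Gk by blast
      ultimately show "\<exists>z. word B z \<and> conc p z \<notin> lang B \<and> (\<forall>k. ?Good (p @ pref k z))"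
        using gl(1) wordB lB by auto
    qed
  qed
  let ?A' = "A\<lparr>acc := Buchi \<alpha>'\<rparr>"
  have langA': "lang ?A' = lang A"
  proof
    show "lang ?A' \<subseteq> lang A"
    proof
      fix w assume "w \<in> lang ?A'"
      then obtain r where "word A w" "run A w r" "inf_set r \<inter> \<alpha>' \<noteq> {}"
        by (auto simp: lang_def accepting_run_def)
      then show "w \<in> lang A" using kb by blast
    qed
    show "lang A \<subseteq> lang ?A'"
    proof
      fix w assume w: "w \<in> lang A"
      then have wd: "word A w" by (simp add: lang_def)
      then have "run A w (\<lambda>i. g (pref i w))" using gfg by (simp add: gfg_strategy_def)
      then show "w \<in> lang ?A'" using ka[OF wd w] wd by (auto simp: lang_def accepting_run_def)
    qed
  qed
  have "gfg_strategy ?A' g"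
    unfolding gfg_strategy_def
  proof (intro allI impI conjI)
    fix w assume wd: "word ?A' w"
    then show "run ?A' w (\<lambda>i. g (pref i w))" using gfg by (simp add: gfg_strategy_def)
    assume "w \<in> lang ?A'"
    then show "accepts (acc ?A') (inf_set (\<lambda>i. g (pref i w)))" using ka wd langA' by simp
  qed
  then have gfgA': "GFG ?A'" by (auto simp: GFG_def)
  have "weak ?A'"
    unfolding weak_def
  proof (intro exI[of _ \<alpha>'] conjI ballI)
    show "acc ?A' = Buchi \<alpha>'" by simp
    show "\<alpha>' \<subseteq> states ?A'" using sub by simp
    fix q assume q: "q \<in> states ?A'"
    show "scc ?A' q \<subseteq> \<alpha>' \<or> scc ?A' q \<inter> \<alpha>' = {}"
    proof (cases "scc A q \<inter> \<alpha>' = {}")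
      case False
      then obtain q'' where q'': "q'' \<in> scc A q" "q'' \<in> \<alpha>'" by blast
      have "q1 \<in> \<alpha>'" if "q1 \<in> scc A q" for q1
      proof -
        have "scc A q1 = scc A q''" using scc_eq[OF that] scc_eq[OF q''(1)] by simp
        moreover have "q1 \<in> states A" using that by (simp add: scc_def)
        ultimately show ?thesis using q''(2) unfolding \<alpha>'_def by auto
      qed
      then show ?thesis by auto
    qed simp
  qed
  then show ?thesis using sub gfgA' langA' by blast
qed

end
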